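(* In the setting of the context, for all triples $(T,L,v)\in\{1,\ldots,L\}\times\mathbb N_+\times[0.5,1)$ and any $u_{\mathrm{cut}}\in\{1,\ldots,p-1\}$, $$V^+_{T,L}(v,\rho_{\mathrm{thr}}(u_{\mathrm{cut}}+1))\ge V^+_{T,L}(v,\rho_{\mathrm{thr}}(u_{\mathrm{cut}})).$$
   Context: Data: $\boldsymbol X=[\boldsymbol x_1\cdots\boldsymbol x_p]\in\mathbb R^{n\times p}$ with standardized columns, $\boldsymbol y\in\mathbb R^n$; an unknown active set $\mathcal A\subseteq\{1,\ldots,p\}$, the remaining variables being null. T-Rex framework: fix $K,L\ge1$, $T\in\{1,\ldots,L\}$; for $k=1,\ldots,K$ append a dummy matrix $\mathring{\boldsymbol X}_k\in\mathbb R^{n\times L}$ (i.i.d. entries from a univariate distribution with finite mean and variance), run a forward selection method (at most one variable per iteration) on $(\boldsymbol y,[\boldsymbol X\ \mathring{\boldsymbol X}_k])$ and terminate once $T$ dummies are included; $\mathcal C_{k,L}(T)$ = original variables included before termination; $\Phi_{T,L}(j)=\frac1K\sum_k\mathbb 1\{j\in\mathcal C_{k,L}(T)\}$. Dendrogram groups: with $\rho_{j,j'}=\boldsymbol x_j^\top\boldsymbol x_{j'}$, agglomerative hierarchical clustering with distance $1-|\rho|$ (single, complete, or average linkage) gives merge heights $c_1\ge\cdots\ge c_{p-1}$; set $c_0=1$, $c_p=0$, $\rho_{\mathrm{thr}}(u)=1-c_u$ for $u=1,\ldots,p$; $\mathrm{Gr}(j,\rho_{\mathrm{thr}}(u_{\mathrm{cut}}))$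 is the set of $j'\neq j$ in the same cluster as $j$ when the dendrogram is cut at distance $1-\rho_{\mathrm{thr}}(u_{\mathrm{cut}})$. Define $\Psi^+_{T,L}(j,\rho)=\big(2-\min_{j'\in\mathrm{Gr}(j,\rho)}|\Phi_{T,L}(j)-\Phi_{T,L}(j')|\big)^{-1}$ if $\mathrm{Gr}(j,\rho)\ne\varnothing$ and $\Psi^+_{T,L}(j,\rho)=1$ otherwise, and $$V^+_{T,L}(v,\rho)=\big|\{\text{null } j:\Psi^+_{T,L}(j,\rho)\cdot\Phi_{T,L}(j)>v\}\big|.$$ *)

theory Defs
  imports Complex_Main
begin

text \<open>The design matrix X is an n x p real matrix given as a function
  X i j (row i in {1..n}, column j in {1..p}).\<close>

definition standardized_cols :: "nat \<Rightarrow> nat \<Rightarrow> (nat \<Rightarrow> nat \<Rightarrow> real) \<Rightarrow> bool" where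
  "standardized_cols n p X \<longleftrightarrow>
     (\<forall>j\<in>{1..p}. (\<Sum>i\<in>{1..n}. X i j) = 0 \<and> (\<Sum>i\<in>{1..n}. (X i j)^2) = 1)"

definition corr :: "nat \<Rightarrow> (nat \<Rightarrow> nat \<Rightarrow> real) \<Rightarrow> nat \<Rightarrow> nat \<Rightarrow> real" where
  "corr n X j j' = (\<Sum>i\<in>{1..n}. X i j * X i j')"

definition dissim :: "nat \<Rightarrow> (nat \<Rightarrow> nat \<Rightarrow> real) \<Rightarrow> nat \<Rightarrow> nat \<Rightarrow> real" where
  "dissim n X j j' = 1 - \<bar>corr n X j j'\<bar>"

datatype linkage = Single | Complete | Average

definition link :: "linkage \<Rightarrow> nat \<Rightarrow> (nat \<Rightarrow> nat \<Rightarrow> real) \<Rightarrow> nat set \<Rightarrow> nat set \<Rightarrow> real" where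
  "link lk n X A B = (case lk of
      Single \<Rightarrow> Min ((\<lambda>(a,b). dissim n X a b) ` (A \<times> B))
    | Complete \<Rightarrow> Max ((\<lambda>(a,b). dissim n X a b) ` (A \<times> B))
    | Average \<Rightarrow> (\<Sum>a\<in>A. \<Sum>b\<in>B. dissim n X a b) / (real (card A) * real (card B)))"

text \<open>P i is the partition of {1..p} after i merges (P 0 = singletons); h i (1 \<le> i \<le> p-1)
  is the linkage distance at which the i-th merge takes place.\<close>

definition agglomerative ::
  "linkage \<Rightarrow> nat \<Rightarrow> (nat \<Rightarrow> nat \<Rightarrow> real) \<Rightarrow> nat \<Rightarrow> (nat \<Rightarrow> nat set set) \<Rightarrow> (nat \<Rightarrow> real) \<Rightarrow> bool" where
  "agglomerative lk n X p P h \<longleftrightarrow>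
     P 0 = (\<lambda>j. {j}) ` {1..p} \<and>
     (\<forall>i < p - 1. \<exists>A B. A \<in> P i \<and> B \<in> P i \<and> A \<noteq> B \<and>
        (\<forall>A' B'. A' \<in> P i \<and> B' \<in> P i \<and> A' \<noteq> B' \<longrightarrow> link lk n X A B \<le> link lk n X A' B') \<and>
        P (Suc i) = insert (A \<union> B) (P i - {A, B}) \<and>
        h (Suc i) = link lk n X A B)"

text \<open>Merge heights sorted decreasingly: c_1 \<ge> ... \<ge> c_{p-1}; c_0 = 1, c_p = 0.\<close>

definition merge_height :: "(nat \<Rightarrow> real) \<Rightarrow> nat \<Rightarrow> nat \<Rightarrow> real" where
  "merge_height h p u =
     (if u = 0 then 1 else if p \<le> u then 0
      else rev (sort (map h [1..<p])) ! (u - 1))"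

definition rho_thr :: "(nat \<Rightarrow> real) \<Rightarrow> nat \<Rightarrow> nat \<Rightarrow> real" where
  "rho_thr h p u = 1 - merge_height h p u"

text \<open>Cutting the dendrogram at distance d: perform all merges of height \<le> d.\<close>

definition cut_partition :: "(nat \<Rightarrow> nat set set) \<Rightarrow> (nat \<Rightarrow> real) \<Rightarrow> nat \<Rightarrow> real \<Rightarrow> nat set set" where
  "cut_partition P h p d = P (card {i \<in> {1..p-1}. h i \<le> d})"

definition Gr :: "(nat \<Rightarrow> nat set set) \<Rightarrow> (nat \<Rightarrow> real) \<Rightarrow> nat \<Rightarrow> nat \<Rightarrow> real \<Rightarrow> nat set" where
  "Gr P h p j \<rho> = {j'. j' \<noteq> j \<and> (\<exists>S \<in> cut_partition P h p (1 - \<rho>). j \<in> S \<and> j' \<in> S)}"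

text \<open>C k T L = candidate set C_{k,L}(T) (original variables in {1..p} selected in the
  k-th random experiment before the T-th dummy enters).\<close>

definition Phi :: "nat \<Rightarrow> (nat \<Rightarrow> nat \<Rightarrow> nat \<Rightarrow> nat set) \<Rightarrow> nat \<Rightarrow> nat \<Rightarrow> nat \<Rightarrow> real" where
  "Phi K C T L j = (1 / real K) * (\<Sum>k\<in>{1..K}. if j \<in> C k T L then 1 else 0)"

definition Psi_plus ::
  "nat \<Rightarrow> (nat \<Rightarrow> nat \<Rightarrow> nat \<Rightarrow> nat set) \<Rightarrow> (nat \<Rightarrow> nat set set) \<Rightarrow> (nat \<Rightarrow> real) \<Rightarrow> nat
    \<Rightarrow> nat \<Rightarrow> nat \<Rightarrow> nat \<Rightarrow> real \<Rightarrow> real" where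
  "Psi_plus K C P h p T L j \<rho> =
     (if Gr P h p j \<rho> = {} then 1
      else 1 / (2 - Min ((\<lambda>j'. \<bar>Phi K C T L j - Phi K C T L j'\<bar>) ` Gr P h p j \<rho>)))"

definition V_plus ::
  "nat \<Rightarrow> (nat \<Rightarrow> nat \<Rightarrow> nat \<Rightarrow> nat set) \<Rightarrow> (nat \<Rightarrow> nat set set) \<Rightarrow> (nat \<Rightarrow> real) \<Rightarrow> nat
    \<Rightarrow> nat set \<Rightarrow> nat \<Rightarrow> nat \<Rightarrow> real \<Rightarrow> real \<Rightarrow> nat" where
  "V_plus K C P h p Act T L v \<rho> =
     card {j \<in> {1..p} - Act. Psi_plus K C P h p T L j \<rho> * Phi K C T L j > v}"

end

theory Submission
  imports Defs
begin

lemma corr_bound: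
  assumes "standardized_cols n p X" "j \<in> {1..p}" "j' \<in> {1..p}"
  shows "\<bar>corr n X j j'\<bar> \<le> 1"
proof -
  have s1: "(\<Sum>i\<in>{1..n}. (X i j)^2) = 1" "(\<Sum>i\<in>{1..n}. (X i j')^2) = 1"
    using assms unfolding standardized_cols_def by auto
  have "\<bar>corr n X j j'\<bar> \<le> (\<Sum>i\<in>{1..n}. \<bar>X i j * X i j'\<bar>)"
    unfolding corr_def by (rule sum_abs)
  also have "\<dots> \<le> (\<Sum>i\<in>{1..n}. ((X i j)^2 + (X i j')^2) / 2)"
  proof (rule sum_mono)
    fix i
    have "0 \<le> (\<bar>X i j\<bar> - \<bar>X i j'\<bar>)^2" by simp
    then show "\<bar>X i j * X i j'\<bar> \<le> ((X i j)^2 + (X i j')^2) / 2"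
      by (simp add: power2_eq_square abs_mult algebra_simps)
  qed
  also have "\<dots> = 1" using s1 by (simp add: sum_divide_distrib[symmetric] sum.distrib)
  finally show ?thesis .
qed

lemma dissim_nonneg:
  assumes "standardized_cols n p X" "j \<in> {1..p}" "j' \<in> {1..p}"
  shows "0 \<le> dissim n X j j'"
  using corr_bound[OF assms] unfolding dissim_def by simp

lemma agg_step:
  assumes "agglomerative lk n X p P h" "i < p - 1"
  obtains A B where "A \<in> P i" "B \<in> P i"
    "P (Suc i) = insert (A \<union> B) (P i - {A, B})" "h (Suc i) = link lk n X A B"
proof -
  have "\<forall>i < p - 1. \<exists>A B. A \<in> P i \<and> B \<in> P i \<and> A \<noteq> B \<and>
        (\<forall>A' B'. A' \<in> P i \<and> B' \<in> P i \<and> A' \<noteq> B' \<longrightarrow> link lk n X A B \<le> link lk n X A' B') \<and>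
        P (Suc i) = insert (A \<union> B) (P i - {A, B}) \<and>
        h (Suc i) = link lk n X A B" using assms(1) unfolding agglomerative_def by (rule conjunct2)
  from this[rule_format, OF assms(2)] show ?thesis
    by (elim exE conjE) (rule that, assumption+)
qed

lemma agg_inv:
  assumes "agglomerative lk n X p P h" "i \<le> p - 1"
  shows "\<forall>S\<in>P i. S \<noteq> {} \<and> S \<subseteq> {1..p}"
  using assms(2)
proof (induction i)
  case 0
  have "P 0 = (\<lambda>j. {j}) ` {1..p}" using assms(1) unfolding agglomerative_def by (rule conjunct1)
  then show ?case by auto
next
  case (Suc i)
  then have "i < p - 1" by simp
  obtain A B where AB: "A \<in> P i" "B \<in> P i" "P (Suc i) = insert (A \<union> B) (P i - {A, B})" "h (Suc i) = link lk n X A B"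
    by (rule agg_step[OF assms(1) \<open>i < p - 1\<close>])
  have IH: "\<forall>S\<in>P i. S \<noteq> {} \<and> S \<subseteq> {1..p}" using Suc by simp
  show ?case unfolding AB(3)
  proof
    fix S assume "S \<in> insert (A \<union> B) (P i - {A, B})"
    then have "S = A \<union> B \<or> S \<in> P i" by blast
    then show "S \<noteq> {} \<and> S \<subseteq> {1..p}"
    proof
      assume "S = A \<union> B" then show ?thesis using IH AB(1,2) by blast
    qed (use IH in blast)
  qed
qed

lemma agg_mono:
  assumes "agglomerative lk n X p P h" "i \<le> i'" "i' \<le> p - 1"
    "S \<in> P i" "j \<in> S" "j' \<in> S"
  shows "\<exists>S'\<in>P i'. j \<in> S' \<and> j' \<in> S'"
  using assms(2,3)
proof (induction i' rule: dec_induct)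
  case base
  then show ?case using assms by blast
next
  case (step m)
  then have "m < p - 1" by simp
  obtain A B where AB: "A \<in> P m" "B \<in> P m" "P (Suc m) = insert (A \<union> B) (P m - {A, B})" "h (Suc m) = link lk n X A B"
    by (rule agg_step[OF assms(1) \<open>m < p - 1\<close>])
  obtain S' where S': "S' \<in> P m" "j \<in> S'" "j' \<in> S'" using step by auto
  show ?case
  proof (cases "S' = A \<or> S' = B")
    case True
    then have "j \<in> A \<union> B" "j' \<in> A \<union> B" using S' by auto
    then show ?thesis using AB(3) by blast
  next
    case False
    then have "S' \<in> P (Suc m)" using AB(3) S'(1) by blast
    then show ?thesis using S' by blast
  qed
qed

lemma h_nonneg:
  assumes "agglomerative lk n X p P h" "standardized_cols n p X" "i \<in> {1..p-1}"
  shows "0 \<le> h i"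
proof -
  obtain m where m: "i = Suc m" using assms(3) by (cases i) auto
  then have "m < p - 1" using assms(3) by simp
  obtain A B where AB: "A \<in> P m" "B \<in> P m" "P (Suc m) = insert (A \<union> B) (P m - {A, B})" "h (Suc m) = link lk n X A B"
    by (rule agg_step[OF assms(1) \<open>m < p - 1\<close>])
  have inv: "\<forall>S\<in>P m. S \<noteq> {} \<and> S \<subseteq> {1..p}" using agg_inv[OF assms(1), of m] \<open>m < p - 1\<close> by linarith
  have A: "A \<noteq> {}" "A \<subseteq> {1..p}" "finite A" using inv AB(1,2) by (auto intro: finite_subset)
  have B: "B \<noteq> {}" "B \<subseteq> {1..p}" "finite B" using inv AB(1,2) by (auto intro: finite_subset)
  have nn: "\<And>a b. a \<in> A \<Longrightarrow> b \<in> B \<Longrightarrow> 0 \<le> dissim n X a b"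
    using A B dissim_nonneg[OF assms(2)] by blast
  have fin: "finite ((\<lambda>(a,b). dissim n X a b) ` (A \<times> B))" using A B by simp
  have ne: "(\<lambda>(a,b). dissim n X a b) ` (A \<times> B) \<noteq> {}" using A B by simp
  have allnn: "\<forall>x\<in>(\<lambda>(a,b). dissim n X a b) ` (A \<times> B). 0 \<le> x" using nn by auto
  show ?thesis
  proof (cases lk)
    case Single
    then have "h i = Min ((\<lambda>(a,b). dissim n X a b) ` (A \<times> B))" using AB m by (simp add: link_def)
    then show ?thesis using Min_in[OF fin ne] allnn by metis
  next
    case Complete
    then have "h i = Max ((\<lambda>(a,b). dissim n X a b) ` (A \<times> B))" using AB m by (simp add: link_def)
    then show ?thesis using Max_in[OF fin ne] allnn by metis
  next
    case Average
    have "0 \<le> (\<Sum>a\<in>A. \<Sum>b\<in>B. dissim n X a b)" using nn by (intro sum_nonneg) auto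
    then show ?thesis using AB m Average by (simp add: link_def)
  qed
qed

lemma Phi_bounds:
  assumes "K \<ge> 1"
  shows "0 \<le> Phi K C T L j" "Phi K C T L j \<le> 1"
proof -
  have s: "(\<Sum>k\<in>{1..K}. if j \<in> C k T L then 1 else 0) \<le> (\<Sum>k\<in>{1..K}. (1::real))"
    by (rule sum_mono) auto
  have "0 \<le> (\<Sum>k\<in>{1..K}. if j \<in> C k T L then 1 else (0::real))" by (rule sum_nonneg) auto
  then show "0 \<le> Phi K C T L j" unfolding Phi_def by simp
  show "Phi K C T L j \<le> 1" using s assms unfolding Phi_def by (simp add: field_simps)
qed


lemma Gr_mono:
  assumes agg: "agglomerative lk n X p P h" and r: "rho0 \<le> rho1"
  shows "Gr P h p j rho1 \<subseteq> Gr P h p j rho0"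
proof
  fix j' assume "j' \<in> Gr P h p j rho1"
  then obtain S where S: "j' \<noteq> j" "S \<in> cut_partition P h p (1 - rho1)" "j \<in> S" "j' \<in> S"
    unfolding Gr_def by blast
  let ?N1 = "card {i \<in> {1..p-1}. h i \<le> 1 - rho1}"
  let ?N0 = "card {i \<in> {1..p-1}. h i \<le> 1 - rho0}"
  have "{i \<in> {1..p-1}. h i \<le> 1 - rho1} \<subseteq> {i \<in> {1..p-1}. h i \<le> 1 - rho0}" using r by auto
  then have le: "?N1 \<le> ?N0" by (intro card_mono) auto
  have "?N0 \<le> card {1..p-1}" by (intro card_mono) auto
  then have le2: "?N0 \<le> p - 1" by simp
  have "\<exists>S'\<in>P ?N0. j \<in> S' \<and> j' \<in> S'"
    using agg_mono[OF agg le le2, of S j j'] S unfolding cut_partition_def by blast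
  then show "j' \<in> Gr P h p j rho0" using S(1) unfolding Gr_def cut_partition_def by blast
qed

lemma Gr_sub:
  assumes agg: "agglomerative lk n X p P h"
  shows "Gr P h p j rho \<subseteq> {1..p}"
proof
  fix j' assume "j' \<in> Gr P h p j rho"
  then obtain S where S: "S \<in> cut_partition P h p (1 - rho)" "j' \<in> S"
    unfolding Gr_def by blast
  let ?N = "card {i \<in> {1..p-1}. h i \<le> 1 - rho}"
  have "?N \<le> card {1..p-1}" by (intro card_mono) auto
  then have "?N \<le> p - 1" by simp
  then show "j' \<in> {1..p}" using agg_inv[OF agg, of ?N] S unfolding cut_partition_def by blast
qed

lemma Psi_mono:
  assumes sub: "G1 \<subseteq> G0" and fin: "finite G0" and K: "K \<ge> 1"
    and g1: "Gr P h p j rho1 = G1" and g0: "Gr P h p j rho0 = G0"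
  shows "Psi_plus K C P h p T L j rho0 \<le> Psi_plus K C P h p T L j rho1"
proof -
  let ?f = "\<lambda>j'. \<bar>Phi K C T L j - Phi K C T L j'\<bar>"
  have fb: "\<And>j'. 0 \<le> ?f j' \<and> ?f j' \<le> 1"
    using Phi_bounds[OF K] by (smt (verit))
  show ?thesis
  proof (cases "G0 = {}")
    case True
    then have "G1 = {}" using sub by blast
    then show ?thesis using True g0 g1 unfolding Psi_plus_def by simp
  next
    case ne0: False
    have m0: "Min (?f ` G0) \<in> ?f ` G0" using fin ne0 by (intro Min_in) auto
    then have m0b: "0 \<le> Min (?f ` G0)" "Min (?f ` G0) \<le> 1" using fb by auto
    show ?thesis
    proof (cases "G1 = {}")
      case True
      have "1 / (2 - Min (?f ` G0)) \<le> 1" using m0b by (simp add: field_simps)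
      then show ?thesis using True ne0 g0 g1 unfolding Psi_plus_def by simp
    next
      case False
      have fin1: "finite G1" using fin sub finite_subset by blast
      have "Min (?f ` G0) \<le> Min (?f ` G1)"
        using Min_antimono[of "?f ` G1" "?f ` G0"] sub False fin by auto
      moreover have "Min (?f ` G1) \<in> ?f ` G1" using fin1 False by (intro Min_in) auto
      then have "Min (?f ` G1) \<le> 1" using fb by auto
      ultimately have "1 / (2 - Min (?f ` G0)) \<le> 1 / (2 - Min (?f ` G1))"
        using m0b by (intro divide_left_mono) auto
      then show ?thesis using False ne0 g0 g1 unfolding Psi_plus_def by simp
    qed
  qed
qed

lemma mh_mono:
  assumes agg: "agglomerative lk n X p P h" and st: "standardized_cols n p X"
    and u: "u \<in> {1..p-1}"
  shows "merge_height h p (u + 1) \<le> merge_height h p u"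
proof -
  let ?xs = "map h [1..<p]"
  have len: "length ?xs = p - 1" by simp
  have d0: "merge_height h p u = rev (sort ?xs) ! (u - 1)" using u unfolding merge_height_def by auto
  show ?thesis
  proof (cases "u + 1 = p")
    case True
    then have "merge_height h p (u+1) = 0" unfolding merge_height_def by simp
    moreover have "rev (sort ?xs) ! (u - 1) \<in> set (rev (sort ?xs))" using u len by (intro nth_mem) auto
    then have "rev (sort ?xs) ! (u - 1) \<in> h ` {1..<p}" by simp
    then have "0 \<le> rev (sort ?xs) ! (u - 1)" using h_nonneg[OF agg st] by auto
    ultimately show ?thesis using d0 by simp
  next
    case False
    then have d1: "merge_height h p (u+1) = rev (sort ?xs) ! u" using u unfolding merge_height_def by auto
    have a: "rev (sort ?xs) ! u = sort ?xs ! (p - 1 - Suc u)"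
      using u False by (subst rev_nth) auto
    have b: "rev (sort ?xs) ! (u - 1) = sort ?xs ! (p - 1 - Suc (u - 1))"
      using u False by (subst rev_nth) auto
    have "sort ?xs ! (p - 1 - Suc u) \<le> sort ?xs ! (p - 1 - Suc (u - 1))"
      using u False by (intro sorted_nth_mono) auto
    then show ?thesis using d0 d1 a b by simp
  qed
qed

theorem lemma2:
  fixes n p K :: nat and X :: "nat \<Rightarrow> nat \<Rightarrow> real" and lk :: linkage
    and P :: "nat \<Rightarrow> nat set set" and h :: "nat \<Rightarrow> real"
    and C :: "nat \<Rightarrow> nat \<Rightarrow> nat \<Rightarrow> nat set" and Act :: "nat set"
    and T L u_cut :: nat and v :: real
  assumes "standardized_cols n p X"
    and "agglomerative lk n X p P h"
    and "Act \<subseteq> {1..p}"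
    and "K \<ge> 1"
    and "\<forall>k\<in>{1..K}. \<forall>T'. \<forall>L'. C k T' L' \<subseteq> {1..p}"
    and "L \<ge> 1" and "T \<in> {1..L}"
    and "0.5 \<le> v" and "v < 1"
    and "u_cut \<in> {1..p-1}"
  shows "V_plus K C P h p Act T L v (rho_thr h p (u_cut + 1))
           \<ge> V_plus K C P h p Act T L v (rho_thr h p u_cut)"
proof -
  let ?r1 = "rho_thr h p (u_cut + 1)" and ?r0 = "rho_thr h p u_cut"
  have r: "?r0 \<le> ?r1" using mh_mono[OF assms(2) assms(1) assms(10)] unfolding rho_thr_def by simp
  have ps: "\<And>j. Psi_plus K C P h p T L j ?r0 \<le> Psi_plus K C P h p T L j ?r1"
  proof -
    fix j
    show "Psi_plus K C P h p T L j ?r0 \<le> Psi_plus K C P h p T L j ?r1"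
      by (rule Psi_mono[OF Gr_mono[OF assms(2) r] finite_subset[OF Gr_sub[OF assms(2)]] assms(4) refl refl]) simp
  qed
  have "{j \<in> {1..p} - Act. Psi_plus K C P h p T L j ?r0 * Phi K C T L j > v}
      \<subseteq> {j \<in> {1..p} - Act. Psi_plus K C P h p T L j ?r1 * Phi K C T L j > v}"
  proof
    fix j assume j: "j \<in> {j \<in> {1..p} - Act. Psi_plus K C P h p T L j ?r0 * Phi K C T L j > v}"
    have "Psi_plus K C P h p T L j ?r0 * Phi K C T L j \<le> Psi_plus K C P h p T L j ?r1 * Phi K C T L j"
      using ps[of j] Phi_bounds(1)[OF assms(4)] by (intro mult_right_mono) auto
    then show "j \<in> {j \<in> {1..p} - Act. Psi_plus K C P h p T L j ?r1 * Phi K C T L j > v}"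
      using j by auto
  qed
  then show ?thesis unfolding V_plus_def by (intro card_mono) auto
qed

end
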